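(* Let $\lambda\ne0$. For each $\alpha>0$, the function $L_2(E)=2\int_{\alpha}^{\kappa_M(E)}\frac{d\kappa}{\sqrt{E-F(\kappa)}}$ is real analytic on $(F(\alpha),\infty)$. Moreover, for each $\alpha\in(0,2\sqrt{|\lambda|})$, $L_2(E)\to0$ as $E\to\infty$.
   Context: $F(\kappa)=\frac14\kappa^4-\frac{\lambda^2}{2}\kappa^2$; $\kappa_M(E)=\sqrt{\lambda^2+\sqrt{\lambda^4+4E}}$ for $E>-\lambda^4/4$. *)

theory Defs
  imports "HOL-Analysis.Analysis"
begin

definition F :: "real \<Rightarrow> real \<Rightarrow> real" where
  "F lam k = k^4 / 4 - lam^2 / 2 * k^2"

definition kappaM :: "real \<Rightarrow> real \<Rightarrow> real" where
  "kappaM lam E = sqrt (lam^2 + sqrt (lam^4 + 4 * E))"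

text \<open>L_2(E) = 2 * integral from alpha to kappa_M(E) of 1/sqrt(E - F(k)) (improper at the
  upper endpoint; taken as a Lebesgue integral on the interval).\<close>
definition L2 :: "real \<Rightarrow> real \<Rightarrow> real \<Rightarrow> real" where
  "L2 lam alpha E = 2 * (LBINT k=alpha..kappaM lam E. 1 / sqrt (E - F lam k))"

definition real_analytic_on :: "(real \<Rightarrow> real) \<Rightarrow> real set \<Rightarrow> bool" where
  "real_analytic_on f S \<longleftrightarrow>
     (\<forall>x\<in>S. \<exists>r>0. \<exists>a :: nat \<Rightarrow> real.
        \<forall>y. \<bar>y - x\<bar> < r \<longrightarrow> (\<lambda>n. a n * (y - x)^n) sums f y)"

end

theory Submission
  imports Defs "HOL-Real_Asymp.Real_Asymp"
begin

lemma rsq: "0 < (x::real) \<Longrightarrow> x powr (-1/2) = 1 / sqrt x"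
proof -
  assume x: "0 < x"
  have e: "(-1/2::real) = - (1/2)" by simp
  have "x powr (-1/2) = inverse (x powr (1/2))" unfolding e by (rule powr_minus)
  also have "\<dots> = 1 / sqrt x" using x by (metis powr_half_sqrt less_imp_le inverse_eq_divide)
  finally show ?thesis .
qed

lemma int_rsqrt:
  shows "set_integrable lborel (einterval 0 1) (\<lambda>t::real. t powr (-1/2))"
    and "(LBINT t=0..1. t powr (-1/2)) = 2"
proof -
  have D: "\<And>x. 0 < ereal x \<Longrightarrow> ereal x < 1 \<Longrightarrow> DERIV (\<lambda>t. 2 * sqrt t) x :> x powr (-1/2)"
  proof -
    fix x assume "0 < ereal x" "ereal x < 1"
    hence x: "0 < x" by simp
    have "DERIV (\<lambda>t. 2 * sqrt t) x :> 2 * (inverse (sqrt x) / 2)"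
      using x by (auto intro!: derivative_eq_intros)
    moreover have "2 * (inverse (sqrt x) / 2) = x powr (-1/2)"
      using rsq[OF x] by (simp add: inverse_eq_divide)
    ultimately show "DERIV (\<lambda>t. 2 * sqrt t) x :> x powr (-1/2)" by simp
  qed
  have C: "\<And>x. 0 < ereal x \<Longrightarrow> ereal x < 1 \<Longrightarrow> isCont (\<lambda>t::real. t powr (-1/2)) x"
    by (auto intro!: continuous_intros)
  have A: "(((\<lambda>t. 2 * sqrt t) \<circ> real_of_ereal) \<longlongrightarrow> 0) (at_right 0)"
    by (auto simp: zero_ereal_def ereal_tendsto_simps intro!: tendsto_eq_intros)
  have B: "(((\<lambda>t. 2 * sqrt t) \<circ> real_of_ereal) \<longlongrightarrow> 2) (at_left 1)"
    by (auto simp: one_ereal_def ereal_tendsto_simps intro!: tendsto_eq_intros)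
  note R = interval_integral_FTC_nonneg[of 0 1 "\<lambda>t. 2 * sqrt t" "\<lambda>t. t powr (-1/2)" 0 2, OF _ D C _ A B]
  show "set_integrable lborel (einterval 0 1) (\<lambda>t::real. t powr (-1/2))" using R by auto
  show "(LBINT t=0..1. t powr (-1/2)) = 2" using R by auto
qed

lemma int_rsqrt1:
  shows "set_integrable lborel (einterval 0 1) (\<lambda>t::real. (1-t) powr (-1/2))"
    and "(LBINT t=0..1. (1-t) powr (-1/2)) = 2"
proof -
  have D: "\<And>x. 0 < ereal x \<Longrightarrow> ereal x < 1 \<Longrightarrow> DERIV (\<lambda>t. - 2 * sqrt (1-t)) x :> (1-x) powr (-1/2)"
  proof -
    fix x assume "0 < ereal x" "ereal x < 1"
    hence x: "x < 1" by simp
    have "DERIV (\<lambda>t. - 2 * sqrt (1-t)) x :> - 2 * (inverse (sqrt (1-x)) / 2 * (0 - 1))"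
      using x by (auto intro!: derivative_eq_intros)
    moreover have "- 2 * (inverse (sqrt (1-x)) / 2 * (0 - 1)) = (1-x) powr (-1/2)"
      using rsq[of "1-x"] x by (simp add: inverse_eq_divide)
    ultimately show "DERIV (\<lambda>t. - 2 * sqrt (1-t)) x :> (1-x) powr (-1/2)" by simp
  qed
  have C: "\<And>x. 0 < ereal x \<Longrightarrow> ereal x < 1 \<Longrightarrow> isCont (\<lambda>t::real. (1-t) powr (-1/2)) x"
    by (auto intro!: continuous_intros)
  have A: "(((\<lambda>t. - 2 * sqrt (1-t)) \<circ> real_of_ereal) \<longlongrightarrow> -2) (at_right 0)"
    by (auto simp: zero_ereal_def ereal_tendsto_simps intro!: tendsto_eq_intros)
  have B: "(((\<lambda>t. - 2 * sqrt (1-t)) \<circ> real_of_ereal) \<longlongrightarrow> 0) (at_left 1)"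
    by (auto simp: one_ereal_def ereal_tendsto_simps intro!: tendsto_eq_intros)
  note R = interval_integral_FTC_nonneg[of 0 1 "\<lambda>t. - 2 * sqrt (1-t)" "\<lambda>t. (1-t) powr (-1/2)" "-2" 0, OF _ D C _ A B]
  show "set_integrable lborel (einterval 0 1) (\<lambda>t::real. (1-t) powr (-1/2))" using R by auto
  show "(LBINT t=0..1. (1-t) powr (-1/2)) = 2" using R by auto
qed

lemma gchoose_abs_le1:
  fixes a :: real assumes "\<bar>a\<bar> \<le> 1" shows "\<bar>a gchoose n\<bar> \<le> 1"
proof (induction n)
  case 0 then show ?case by simp
next
  case (Suc k)
  have e: "of_nat (Suc k) * (a gchoose Suc k) = (a - of_nat k) * (a gchoose k)"
    using gbinomial_absorption[of k a] gbinomial_absorb_comp[of a k] by simp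
  have ak: "\<bar>a - of_nat k\<bar> \<le> of_nat (Suc k)" using assms by auto
  have "\<bar>(a - of_nat k) * (a gchoose k)\<bar> \<le> of_nat (Suc k) * 1"
    using mult_mono[OF ak Suc.IH] by (simp add: abs_mult)
  hence "of_nat (Suc k) * \<bar>a gchoose Suc k\<bar> \<le> of_nat (Suc k) * 1"
    using e by (metis abs_mult abs_of_nat)
  then show ?case by (simp del: of_nat_Suc)
qed

definition conv :: "(nat \<Rightarrow> real) \<Rightarrow> (nat \<Rightarrow> real) \<Rightarrow> nat \<Rightarrow> real" where
  "conv a b n = (\<Sum>i\<le>n. a i * b (n - i))"

lemma conv_sums:
  fixes a b :: "nat \<Rightarrow> real"
  assumes sa: "summable (\<lambda>n. \<bar>a n\<bar> * \<rho>^n)" and sb: "summable (\<lambda>n. \<bar>b n\<bar> * \<rho>^n)"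
    and d: "\<bar>\<delta>\<bar> \<le> \<rho>"
    and A: "(\<lambda>n. a n * \<delta>^n) sums A" and B: "(\<lambda>n. b n * \<delta>^n) sums B"
  shows "(\<lambda>n. conv a b n * \<delta>^n) sums (A * B)"
proof -
  have na: "summable (\<lambda>n. norm (a n * \<delta>^n))"
    by (rule summable_comparison_test[OF _ sa])
       (auto simp: abs_mult power_abs intro!: mult_left_mono power_mono d)
  have nb: "summable (\<lambda>n. norm (b n * \<delta>^n))"
    by (rule summable_comparison_test[OF _ sb])
       (auto simp: abs_mult power_abs intro!: mult_left_mono power_mono d)
  have "(\<lambda>k. \<Sum>i\<le>k. (a i * \<delta>^i) * (b (k - i) * \<delta>^(k - i))) sums ((\<Sum>k. a k * \<delta>^k) * (\<Sum>k. b k * \<delta>^k))"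
    by (rule Cauchy_product_sums[OF na nb])
  moreover have "(\<Sum>k. a k * \<delta>^k) = A" "(\<Sum>k. b k * \<delta>^k) = B"
    using A B by (auto simp: sums_iff)
  moreover have "(\<Sum>i\<le>k. (a i * \<delta>^i) * (b (k - i) * \<delta>^(k - i))) = conv a b k * \<delta>^k" for k
  proof -
    have "(\<Sum>i\<le>k. (a i * \<delta>^i) * (b (k - i) * \<delta>^(k - i))) = (\<Sum>i\<le>k. (a i * b (k - i)) * \<delta>^k)"
    proof (rule sum.cong)
      fix i assume "i \<in> {..k}"
      hence "\<delta>^i * \<delta>^(k - i) = \<delta>^k" by (simp add: power_add[symmetric])
      thus "(a i * \<delta>^i) * (b (k - i) * \<delta>^(k - i)) = (a i * b (k - i)) * \<delta>^k"
        by (metis (no_types, lifting) mult.assoc mult.left_commute)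
    qed simp
    also have "\<dots> = conv a b k * \<delta>^k" by (simp add: conv_def sum_distrib_right)
    finally show ?thesis .
  qed
  ultimately show ?thesis by simp
qed

lemma conv_abs:
  fixes a b :: "nat \<Rightarrow> real"
  assumes sa: "summable (\<lambda>n. \<bar>a n\<bar> * \<rho>^n)" and sb: "summable (\<lambda>n. \<bar>b n\<bar> * \<rho>^n)"
    and r: "0 \<le> \<rho>"
  shows "summable (\<lambda>n. \<bar>conv a b n\<bar> * \<rho>^n)"
    and "(\<Sum>n. \<bar>conv a b n\<bar> * \<rho>^n) \<le> (\<Sum>n. \<bar>a n\<bar> * \<rho>^n) * (\<Sum>n. \<bar>b n\<bar> * \<rho>^n)"
proof -
  have S: "(\<lambda>n. conv (\<lambda>n. \<bar>a n\<bar>) (\<lambda>n. \<bar>b n\<bar>) n * \<rho>^n) sums ((\<Sum>n. \<bar>a n\<bar> * \<rho>^n) * (\<Sum>n. \<bar>b n\<bar> * \<rho>^n))"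
    by (rule conv_sums) (use sa sb r in \<open>auto simp: summable_sums\<close>)
  have le: "norm (\<bar>conv a b n\<bar> * \<rho>^n) \<le> conv (\<lambda>n. \<bar>a n\<bar>) (\<lambda>n. \<bar>b n\<bar>) n * \<rho>^n" for n
  proof -
    have "\<bar>conv a b n\<bar> \<le> conv (\<lambda>n. \<bar>a n\<bar>) (\<lambda>n. \<bar>b n\<bar>) n"
      unfolding conv_def by (rule order_trans[OF sum_abs]) (simp add: abs_mult)
    thus ?thesis using r by (simp add: abs_mult mult_right_mono)
  qed
  show "summable (\<lambda>n. \<bar>conv a b n\<bar> * \<rho>^n)"
    by (rule summable_comparison_test[OF _ sums_summable[OF S]]) (use le in auto)
  have "(\<Sum>n. \<bar>conv a b n\<bar> * \<rho>^n) \<le> (\<Sum>n. conv (\<lambda>n. \<bar>a n\<bar>) (\<lambda>n. \<bar>b n\<bar>) n * \<rho>^n)"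
    by (rule suminf_le) (use le sums_summable[OF S] \<open>summable (\<lambda>n. \<bar>conv a b n\<bar> * \<rho>^n)\<close> in \<open>auto intro: order_trans[OF abs_ge_self]\<close>)
  thus "(\<Sum>n. \<bar>conv a b n\<bar> * \<rho>^n) \<le> (\<Sum>n. \<bar>a n\<bar> * \<rho>^n) * (\<Sum>n. \<bar>b n\<bar> * \<rho>^n)"
    using S by (simp add: sums_iff)
qed

definition bin :: "real \<Rightarrow> real \<Rightarrow> real \<Rightarrow> nat \<Rightarrow> real" where
  "bin g p q n = p powr g * (g gchoose n) * (q / p)^n"

lemma bin_sums:
  fixes p q \<delta> g :: real
  assumes p: "0 < p" and d: "\<bar>q * \<delta>\<bar> < p"
  shows "(\<lambda>n. bin g p q n * \<delta>^n) sums (p + q * \<delta>) powr g"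
proof -
  have z: "\<bar>q * \<delta> / p\<bar> < 1" using p d by (simp add: abs_divide divide_less_eq)
  have "(\<lambda>n. p powr g * ((g gchoose n) * (q * \<delta> / p)^n)) sums (p powr g * (1 + q * \<delta> / p) powr g)"
    by (rule sums_mult[OF gen_binomial_real[OF z]])
  moreover have "p powr g * (1 + q * \<delta> / p) powr g = (p + q * \<delta>) powr g"
  proof -
    have "1 + q * \<delta> / p > 0" using z by linarith
    hence "p powr g * (1 + q * \<delta> / p) powr g = (p * (1 + q * \<delta> / p)) powr g"
      using p by (simp add: powr_mult)
    also have "p * (1 + q * \<delta> / p) = p + q * \<delta>" using p by (simp add: field_simps)
    finally show ?thesis .
  qed
  moreover have "p powr g * ((g gchoose n) * (q * \<delta> / p)^n) = bin g p q n * \<delta>^n" for n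
  proof -
    have "q * \<delta> / p = (q / p) * \<delta>" by simp
    thus ?thesis by (simp only: bin_def power_mult_distrib mult_ac)
  qed
  ultimately show ?thesis by simp
qed

lemma bin_abs:
  fixes p q \<rho> g :: real
  assumes p: "0 < p" and r: "0 \<le> \<rho>" and q: "\<bar>q\<bar> * \<rho> \<le> p / 2" and g: "\<bar>g\<bar> \<le> 1"
  shows "summable (\<lambda>n. \<bar>bin g p q n\<bar> * \<rho>^n)"
    and "(\<Sum>n. \<bar>bin g p q n\<bar> * \<rho>^n) \<le> 2 * p powr g"
proof -
  have le: "norm (\<bar>bin g p q n\<bar> * \<rho>^n) \<le> p powr g * (1/2)^n" for n
  proof -
    have "\<bar>bin g p q n\<bar> * \<rho>^n = p powr g * \<bar>g gchoose n\<bar> * (\<bar>q\<bar> * \<rho> / p)^n"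
      using p r by (simp add: bin_def abs_mult power_abs power_divide power_mult_distrib)
    also have "\<dots> \<le> p powr g * 1 * (1/2)^n"
    proof (intro mult_mono power_mono)
      show "\<bar>g gchoose n\<bar> \<le> 1" by (rule gchoose_abs_le1[OF g])
      show "\<bar>q\<bar> * \<rho> / p \<le> 1/2" using p q by (simp add: divide_le_eq)
    qed (use p r in auto)
    finally show ?thesis using r by simp
  qed
  have gs: "(\<lambda>n. p powr g * (1/2::real)^n) sums (p powr g * 2)"
    using sums_mult[OF geometric_sums[of "1/2::real"], of "p powr g"] by simp
  show "summable (\<lambda>n. \<bar>bin g p q n\<bar> * \<rho>^n)"
    by (rule summable_comparison_test[OF _ sums_summable[OF gs]]) (use le in auto)
  have "(\<Sum>n. \<bar>bin g p q n\<bar> * \<rho>^n) \<le> (\<Sum>n. p powr g * (1/2::real)^n)"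
    by (rule suminf_le) (use le sums_summable[OF gs] \<open>summable (\<lambda>n. \<bar>bin g p q n\<bar> * \<rho>^n)\<close> in \<open>auto intro: order_trans[OF abs_ge_self]\<close>)
  thus "(\<Sum>n. \<bar>bin g p q n\<bar> * \<rho>^n) \<le> 2 * p powr g" using gs by (simp add: sums_iff)
qed

primrec pw :: "(nat \<Rightarrow> real) \<Rightarrow> nat \<Rightarrow> nat \<Rightarrow> real" where
  "pw b 0 = (\<lambda>j. if j = 0 then 1 else 0)"
| "pw b (Suc n) = conv b (pw b n)"

lemma pw_props:
  fixes b :: "nat \<Rightarrow> real"
  assumes r0: "0 \<le> r0" and e: "\<bar>e\<bar> \<le> r0"
    and bs: "summable (\<lambda>k. \<bar>b k\<bar> * r0^k)"
    and inner: "(\<lambda>k. b k * e^k) sums \<sigma>"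
  shows "summable (\<lambda>j. \<bar>pw b n j\<bar> * r0^j) \<and> (\<Sum>j. \<bar>pw b n j\<bar> * r0^j) \<le> (\<Sum>k. \<bar>b k\<bar> * r0^k)^n
         \<and> (\<lambda>j. pw b n j * e^j) sums \<sigma>^n"
proof (induction n)
  case 0
  have f1: "(\<lambda>j. \<bar>pw b 0 j\<bar> * r0^j) = (\<lambda>j. if j = 0 then 1 else 0)" by auto
  have f2: "(\<lambda>j. pw b 0 j * e^j) = (\<lambda>j. if j = 0 then 1 else 0)" by auto
  have s: "(\<lambda>j. if j = 0 then 1 else 0) sums (1::real)"
    using sums_single[of 0 "\<lambda>_. 1::real"] by simp
  show ?case unfolding f1 f2 using s by (simp add: sums_iff)
next
  case (Suc n)
  have a1: "summable (\<lambda>j. \<bar>pw b n j\<bar> * r0^j)" using Suc.IH by blast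
  note ca = conv_abs[OF bs a1 r0]
  have X0: "0 \<le> (\<Sum>k. \<bar>b k\<bar> * r0^k)" by (rule suminf_nonneg[OF bs]) (use r0 in auto)
  have "(\<Sum>j. \<bar>pw b (Suc n) j\<bar> * r0^j) \<le> (\<Sum>k. \<bar>b k\<bar> * r0^k) * (\<Sum>j. \<bar>pw b n j\<bar> * r0^j)"
    using ca(2) by simp
  also have "\<dots> \<le> (\<Sum>k. \<bar>b k\<bar> * r0^k) * (\<Sum>k. \<bar>b k\<bar> * r0^k)^n"
    by (rule mult_left_mono) (use Suc.IH X0 in auto)
  finally have le: "(\<Sum>j. \<bar>pw b (Suc n) j\<bar> * r0^j) \<le> (\<Sum>k. \<bar>b k\<bar> * r0^k)^Suc n" by simp
  have "(\<lambda>j. conv b (pw b n) j * e^j) sums (\<sigma> * \<sigma>^n)"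
    by (rule conv_sums[OF bs a1 e inner]) (use Suc.IH in blast)
  then show ?case using ca(1) le by simp
qed

lemma ps_compose:
  fixes A b :: "nat \<Rightarrow> real"
  assumes outer: "\<And>d. \<bar>d\<bar> < \<rho> \<Longrightarrow> (\<lambda>n. A n * d^n) sums G d"
    and r0: "0 < r0" and e: "\<bar>e\<bar> \<le> r0"
    and bs: "summable (\<lambda>k. \<bar>b k\<bar> * r0^k)" and bX: "(\<Sum>k. \<bar>b k\<bar> * r0^k) < \<rho>"
    and inner: "(\<lambda>k. b k * e^k) sums \<sigma>"
  shows "(\<lambda>j. (\<Sum>n. A n * pw b n j) * e^j) sums G \<sigma>"
proof -
  define X where "X = (\<Sum>k. \<bar>b k\<bar> * r0^k)"
  have X0: "0 \<le> X" unfolding X_def by (rule suminf_nonneg[OF bs]) (use r0 in auto)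
  note P = pw_props[OF less_imp_le[OF r0] e bs inner, folded X_def]
  define X' where "X' = (X + \<rho>) / 2"
  have "X < X'" "X' < \<rho>" using bX unfolding X'_def X_def by auto
  have "summable (\<lambda>n. A n * X'^n)" using outer[of X'] \<open>X < X'\<close> \<open>X' < \<rho>\<close> X0
    by (auto simp: sums_iff)
  from powser_insidea[OF this, of X] have sA: "summable (\<lambda>n. \<bar>A n\<bar> * X^n)"
    using \<open>X < X'\<close> X0 by (simp add: abs_mult power_abs)
  define F where "F = (\<lambda>(n,j). \<bar>A n\<bar> * (\<bar>pw b n j\<bar> * r0^j))"
  define f where "f = (\<lambda>(n,j). A n * pw b n j * e^j)"
  have F0: "F x \<ge> 0" for x using r0 by (auto simp: F_def split: prod.split)
  have Frow: "((\<lambda>j. F (n,j)) has_sum (\<bar>A n\<bar> * (\<Sum>j. \<bar>pw b n j\<bar> * r0^j))) UNIV" for n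
  proof -
    have "(\<lambda>j. \<bar>A n\<bar> * (\<bar>pw b n j\<bar> * r0^j)) sums (\<bar>A n\<bar> * (\<Sum>j. \<bar>pw b n j\<bar> * r0^j))"
      by (rule sums_mult) (use P in \<open>auto simp: summable_sums\<close>)
    thus ?thesis unfolding F_def by (intro sums_nonneg_imp_has_sum) (use r0 in auto)
  qed
  have gsum: "(\<lambda>n. \<bar>A n\<bar> * (\<Sum>j. \<bar>pw b n j\<bar> * r0^j)) summable_on UNIV"
  proof -
    have "summable (\<lambda>n. \<bar>A n\<bar> * (\<Sum>j. \<bar>pw b n j\<bar> * r0^j))"
    proof (rule summable_comparison_test[OF _ sA])
      show "\<exists>N. \<forall>n\<ge>N. norm (\<bar>A n\<bar> * (\<Sum>j. \<bar>pw b n j\<bar> * r0^j)) \<le> \<bar>A n\<bar> * X^n"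
      proof (intro exI allI impI)
        fix n
        have nn: "0 \<le> (\<Sum>j. \<bar>pw b n j\<bar> * r0^j)" by (rule suminf_nonneg) (use P r0 in auto)
        have "(\<Sum>j. \<bar>pw b n j\<bar> * r0^j) \<le> X^n" using P by blast
        thus "norm (\<bar>A n\<bar> * (\<Sum>j. \<bar>pw b n j\<bar> * r0^j)) \<le> \<bar>A n\<bar> * X^n"
          using nn by (simp add: abs_mult mult_left_mono)
      qed
    qed
    moreover have "\<And>n. 0 \<le> \<bar>A n\<bar> * (\<Sum>j. \<bar>pw b n j\<bar> * r0^j)"
    proof -
      fix n
      have "0 \<le> (\<Sum>j. \<bar>pw b n j\<bar> * r0 ^ j)" by (rule suminf_nonneg) (use P r0 in auto)
      thus "0 \<le> \<bar>A n\<bar> * (\<Sum>j. \<bar>pw b n j\<bar> * r0 ^ j)" by simp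
    qed
    ultimately show ?thesis by (simp add: summable_on_UNIV_nonneg_real_iff)
  qed
  have Fsum: "F summable_on UNIV \<times> UNIV"
    using summable_on_SigmaI[where f=F and A=UNIV and B="\<lambda>_. UNIV", OF Frow gsum] F0 by auto
  have fabs: "(\<lambda>x. norm (f x)) summable_on UNIV \<times> UNIV"
  proof (rule Infinite_Sum.abs_summable_on_comparison_test[of F])
    show "(\<lambda>x. norm (F x)) summable_on UNIV \<times> UNIV" using Fsum F0 by (simp add: summable_on_iff_abs_summable_on_real[symmetric])
    fix x :: "nat \<times> nat"
    obtain n j where x: "x = (n,j)" by fastforce
    have "\<bar>e\<bar>^j \<le> r0^j" by (rule power_mono[OF e]) simp
    hence "\<bar>A n\<bar> * \<bar>pw b n j\<bar> * \<bar>e\<bar>^j \<le> \<bar>A n\<bar> * \<bar>pw b n j\<bar> * r0^j"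
      by (rule mult_left_mono) simp
    thus "norm (f x) \<le> norm (F x)" using F0[of x] r0 unfolding x f_def F_def
      by (simp add: abs_mult power_abs mult.assoc abs_of_pos)
  qed
  hence fsum: "f summable_on UNIV \<times> UNIV" by (rule abs_summable_summable)
  then obtain S where S: "(f has_sum S) (UNIV \<times> UNIV)" by (auto simp: summable_on_def)
  have frow: "((\<lambda>j. f (n,j)) has_sum (A n * \<sigma>^n)) UNIV" for n
  proof (rule norm_summable_imp_has_sum)
    show "(\<lambda>j. f (n,j)) sums (A n * \<sigma>^n)" unfolding f_def
      using sums_mult[of "\<lambda>j. pw b n j * e^j" "\<sigma>^n" "A n"] P by (simp add: mult.assoc)
    show "summable (\<lambda>j. norm (f (n,j)))"
    proof (rule summable_comparison_test[OF _ summable_mult[OF conjunct1[OF P[of n]], of "\<bar>A n\<bar>"]])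
      show "\<exists>N. \<forall>j\<ge>N. norm (norm (f (n, j))) \<le> \<bar>A n\<bar> * (\<bar>pw b n j\<bar> * r0 ^ j)"
      proof (intro exI allI impI)
        fix j
        have "\<bar>e\<bar>^j \<le> r0^j" by (rule power_mono[OF e]) simp
        hence "\<bar>A n\<bar> * \<bar>pw b n j\<bar> * \<bar>e\<bar>^j \<le> \<bar>A n\<bar> * \<bar>pw b n j\<bar> * r0^j"
          by (rule mult_left_mono) simp
        thus "norm (norm (f (n, j))) \<le> \<bar>A n\<bar> * (\<bar>pw b n j\<bar> * r0 ^ j)"
          unfolding f_def by (simp add: abs_mult power_abs mult.assoc)
      qed
    qed
  qed
  have rowsum: "((\<lambda>n. A n * \<sigma>^n) has_sum S) UNIV"
    using has_sum_Sigma'[where f=f and a=S and A=UNIV and B="\<lambda>_. UNIV"] S frow by auto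
  have sig: "\<bar>\<sigma>\<bar> \<le> X"
  proof -
    have se: "summable (\<lambda>k. \<bar>b k * e^k\<bar>)"
      by (rule summable_comparison_test[OF _ bs])
         (auto simp: abs_mult power_abs intro!: mult_left_mono power_mono e)
    have "\<bar>\<sigma>\<bar> = \<bar>\<Sum>k. b k * e^k\<bar>" using inner by (simp add: sums_iff)
    also have "\<dots> \<le> (\<Sum>k. \<bar>b k * e^k\<bar>)" by (rule summable_rabs[OF se])
    also have "\<dots> \<le> X" unfolding X_def
      by (rule suminf_le[OF _ se bs]) (auto simp: abs_mult power_abs intro!: mult_left_mono power_mono e)
    finally show ?thesis .
  qed
  have "(\<lambda>n. A n * \<sigma>^n) sums G \<sigma>" by (rule outer) (use sig bX X_def in auto)
  hence SG: "S = G \<sigma>" using has_sum_imp_sums[OF rowsum] sums_unique2 by blast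
  have fcol: "((\<lambda>n. f (n,j)) has_sum ((\<Sum>n. A n * pw b n j) * e^j)) UNIV" for j
  proof -
    have "F summable_on ((\<lambda>n. (n,j)) ` UNIV)"
      by (rule summable_on_subset_banach[OF Fsum]) auto
    hence "(F \<circ> (\<lambda>n. (n,j))) summable_on UNIV"
      by (subst (asm) summable_on_reindex) (auto simp: inj_on_def)
    hence "(\<lambda>n. F (n,j)) summable_on UNIV" by (simp add: comp_def)
    hence "summable (\<lambda>n. F (n,j))" by (rule summable_on_imp_summable)
    hence s1: "summable (\<lambda>n. \<bar>A n * pw b n j\<bar> * r0^j)" unfolding F_def by (simp add: abs_mult mult.assoc)
    have s2: "summable (\<lambda>n. \<bar>A n * pw b n j\<bar>)"
    proof -
      have "(\<lambda>n. \<bar>A n * pw b n j\<bar> * r0^j / r0^j) = (\<lambda>n. \<bar>A n * pw b n j\<bar>)"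
        using r0 by (intro ext) simp
      thus ?thesis using summable_divide[OF s1, of "r0^j"] by simp
    qed
    have s3: "summable (\<lambda>n. A n * pw b n j)" by (rule summable_rabs_cancel[OF s2])
    show ?thesis
    proof (rule norm_summable_imp_has_sum)
      show "(\<lambda>n. f (n,j)) sums ((\<Sum>n. A n * pw b n j) * e^j)" unfolding f_def
        using sums_mult2[OF summable_sums[OF s3], of "e^j"] by simp
      show "summable (\<lambda>n. norm (f (n,j)))" unfolding f_def
        using summable_mult2[OF s2, of "\<bar>e\<bar>^j"] by (simp add: abs_mult power_abs)
    qed
  qed
  have "((\<lambda>(j,n). f (n,j)) has_sum S) (UNIV \<times> UNIV)"
    using has_sum_swap[where f=f and S=S and A=UNIV and B=UNIV] S by simp
  hence "((\<lambda>j. (\<Sum>n. A n * pw b n j) * e^j) has_sum S) UNIV"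
    using has_sum_Sigma'[where f="\<lambda>(j,n). f (n,j)" and a=S and A=UNIV and B="\<lambda>_. UNIV"] fcol by auto
  thus ?thesis using SG has_sum_imp_sums by blast
qed

lemma ps_integral:
  fixes c :: "nat \<Rightarrow> real \<Rightarrow> real" and h g :: "real \<Rightarrow> real" and S :: "real set"
  assumes S: "S \<in> sets lborel"
    and mc: "\<And>n. c n \<in> borel_measurable lborel" and mh: "h \<in> borel_measurable lborel"
    and gint: "set_integrable lborel S g"
    and sm: "\<And>t. t \<in> S \<Longrightarrow> (\<lambda>n. c n t * \<delta>^n) sums h t"
    and bnd: "\<And>t N. t \<in> S \<Longrightarrow> \<bar>\<Sum>n<N. c n t * \<delta>^n\<bar> \<le> g t"
    and cint: "\<And>n. set_integrable lborel S (c n)"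
  shows "(\<lambda>n. (LINT t:S|lborel. c n t) * \<delta>^n) sums (LINT t:S|lborel. h t)"
proof -
  have ci: "integrable lborel (\<lambda>t. indicator S t * c n t)" for n
    using cint[of n] by (simp add: set_integrable_def)
  have eq: "(\<Sum>n<N. (LINT t:S|lborel. c n t) * \<delta>^n) = (LINT t|lborel. indicator S t * (\<Sum>n<N. c n t * \<delta>^n))" for N
  proof -
    have "(LINT t|lborel. indicator S t * (\<Sum>n<N. c n t * \<delta>^n)) = (LINT t|lborel. (\<Sum>n<N. (indicator S t * c n t) * \<delta>^n))"
      by (simp add: sum_distrib_left mult.assoc)
    also have "\<dots> = (\<Sum>n<N. (LINT t|lborel. (indicator S t * c n t) * \<delta>^n))"
      by (rule Bochner_Integration.integral_sum) (use ci in auto)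
    also have "\<dots> = (\<Sum>n<N. (LINT t|lborel. indicator S t * c n t) * \<delta>^n)"
      by simp
    finally show ?thesis by (simp add: set_lebesgue_integral_def)
  qed
  have "(\<lambda>N. LINT t|lborel. indicator S t * (\<Sum>n<N. c n t * \<delta>^n)) \<longlonglongrightarrow> (LINT t|lborel. indicator S t * h t)"
  proof (rule integral_dominated_convergence[where w = "\<lambda>t. indicator S t * g t"])
    show "(\<lambda>t. indicator S t * h t) \<in> borel_measurable lborel" using S mh by measurable
    show "(\<lambda>t. indicator S t * (\<Sum>n<N. c n t * \<delta>^n)) \<in> borel_measurable lborel" for N
      using S mc by measurable
    show "integrable lborel (\<lambda>t. indicator S t * g t)" using gint by (simp add: set_integrable_def)
    show "AE t in lborel. (\<lambda>N. indicator S t * (\<Sum>n<N. c n t * \<delta>^n)) \<longlonglongrightarrow> indicator S t * h t"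
    proof (rule AE_I2)
      fix t show "(\<lambda>N. indicator S t * (\<Sum>n<N. c n t * \<delta>^n)) \<longlonglongrightarrow> indicator S t * h t"
      proof (cases "t \<in> S")
        case True thus ?thesis using sm[OF True] by (simp add: sums_def)
      qed simp
    qed
    show "AE t in lborel. norm (indicator S t * (\<Sum>n<N. c n t * \<delta>^n)) \<le> indicator S t * g t" for N
    proof (rule AE_I2)
      fix t show "norm (indicator S t * (\<Sum>n<N. c n t * \<delta>^n)) \<le> indicator S t * g t"
      proof (cases "t \<in> S")
        case True thus ?thesis using bnd[OF True, of N] by simp
      qed simp
    qed
  qed
  thus ?thesis unfolding sums_def eq by (simp add: set_lebesgue_integral_def)
qed

lemma triple:
  fixes a1 a2 a3 :: "nat \<Rightarrow> real"
  assumes r: "0 \<le> \<rho>" and d: "\<bar>\<delta>\<bar> \<le> \<rho>"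
    and s1: "summable (\<lambda>n. \<bar>a1 n\<bar> * \<rho>^n)" "(\<Sum>n. \<bar>a1 n\<bar> * \<rho>^n) \<le> M1" "(\<lambda>n. a1 n * \<delta>^n) sums X1"
    and s2: "summable (\<lambda>n. \<bar>a2 n\<bar> * \<rho>^n)" "(\<Sum>n. \<bar>a2 n\<bar> * \<rho>^n) \<le> M2" "(\<lambda>n. a2 n * \<delta>^n) sums X2"
    and s3: "summable (\<lambda>n. \<bar>a3 n\<bar> * \<rho>^n)" "(\<Sum>n. \<bar>a3 n\<bar> * \<rho>^n) \<le> M3" "(\<lambda>n. a3 n * \<delta>^n) sums X3"
  shows "summable (\<lambda>n. \<bar>conv (conv a1 a2) a3 n\<bar> * \<rho>^n)"
    and "(\<Sum>n. \<bar>conv (conv a1 a2) a3 n\<bar> * \<rho>^n) \<le> M1 * M2 * M3"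
    and "(\<lambda>n. conv (conv a1 a2) a3 n * \<delta>^n) sums (X1 * X2 * X3)"
proof -
  note c12 = conv_abs[OF s1(1) s2(1) r]
  note c123 = conv_abs[OF c12(1) s3(1) r]
  show "summable (\<lambda>n. \<bar>conv (conv a1 a2) a3 n\<bar> * \<rho>^n)" by (rule c123(1))
  have n1: "0 \<le> (\<Sum>n. \<bar>a1 n\<bar> * \<rho>^n)" by (rule suminf_nonneg[OF s1(1)]) (use r in auto)
  have n2: "0 \<le> (\<Sum>n. \<bar>a2 n\<bar> * \<rho>^n)" by (rule suminf_nonneg[OF s2(1)]) (use r in auto)
  have n3: "0 \<le> (\<Sum>n. \<bar>a3 n\<bar> * \<rho>^n)" by (rule suminf_nonneg[OF s3(1)]) (use r in auto)
  have n12: "0 \<le> (\<Sum>n. \<bar>conv a1 a2 n\<bar> * \<rho>^n)" by (rule suminf_nonneg[OF c12(1)]) (use r in auto)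
  have le12: "(\<Sum>n. \<bar>conv a1 a2 n\<bar> * \<rho>^n) \<le> M1 * M2"
    using c12(2) mult_mono[OF s1(2) s2(2) order_trans[OF n1 s1(2)] n2] by linarith
  have "(\<Sum>n. \<bar>conv a1 a2 n\<bar> * \<rho>^n) * (\<Sum>n. \<bar>a3 n\<bar> * \<rho>^n) \<le> (M1 * M2) * M3"
    by (rule mult_mono[OF le12 s3(2) order_trans[OF n12 le12] n3])
  thus "(\<Sum>n. \<bar>conv (conv a1 a2) a3 n\<bar> * \<rho>^n) \<le> M1 * M2 * M3"
    using c123(2) by linarith
  have "(\<lambda>n. conv a1 a2 n * \<delta>^n) sums (X1 * X2)" by (rule conv_sums[OF s1(1) s2(1) d s1(3) s2(3)])
  thus "(\<lambda>n. conv (conv a1 a2) a3 n * \<delta>^n) sums (X1 * X2 * X3)"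
    by (rule conv_sums[OF c12(1) s3(1) d _ s3(3)])
qed

definition hf :: "real \<Rightarrow> real \<Rightarrow> real \<Rightarrow> real \<Rightarrow> real" where
  "hf lam alpha s t = (s + (lam^2 - alpha^2)) powr (1/2)
      * (s * (1 + t) - (lam^2 - alpha^2) * (1 - t)) powr (-1/2)
      * (alpha^2 + (s + (lam^2 - alpha^2)) * t) powr (-1/2) * (1 - t) powr (-1/2)"

definition Jf :: "real \<Rightarrow> real \<Rightarrow> real \<Rightarrow> real" where
  "Jf lam alpha s = (LBINT t=0..1. hf lam alpha s t)"

lemma Jf_def2: "Jf lam alpha s = (LINT t:einterval 0 1|lborel. hf lam alpha s t)"
  by (simp add: Jf_def interval_lebesgue_integral_def)

lemma J_analytic:
  fixes lam alpha s0 :: real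
  assumes a: "alpha > 0" and s0: "s0 > \<bar>lam^2 - alpha^2\<bar>"
  shows "\<exists>\<rho>>0. \<exists>A. \<forall>\<delta>. \<bar>\<delta>\<bar> < \<rho> \<longrightarrow> (\<lambda>n. A n * \<delta>^n) sums Jf lam alpha (s0 + \<delta>)"
proof -
  define c where "c = lam^2 - alpha^2"
  define p1 where "p1 = s0 + c"
  define p2 where "p2 = (\<lambda>t::real. s0 * (1 + t) - c * (1 - t))"
  define p3 where "p3 = (\<lambda>t::real. alpha^2 + (s0 + c) * t)"
  define pm where "pm = min p1 (min (s0 - \<bar>c\<bar>) (alpha^2))"
  define \<rho> where "\<rho> = pm / 4"
  define S where "S = einterval (0::ereal) 1"
  have c_abs: "s0 > \<bar>c\<bar>" using s0 by (simp add: c_def)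
  have pm0: "pm > 0" unfolding pm_def p1_def using c_abs a by auto
  have pmp1: "pm \<le> p1" unfolding pm_def by simp
  have r0: "\<rho> > 0" using pm0 by (simp add: \<rho>_def)
  have tS: "t \<in> S \<longleftrightarrow> 0 < t \<and> t < 1" for t by (simp add: S_def einterval_iff)
  have p2ge: "p2 t \<ge> pm" if "t \<in> S" for t
  proof -
    have t: "0 < t" "t < 1" using that tS by auto
    have "c * (1 - t) \<le> \<bar>c\<bar> * (1 - t)" using t by (intro mult_right_mono) auto
    moreover have "\<bar>c\<bar> * (1 - t) \<le> \<bar>c\<bar>" using t by (simp add: mult_left_le)
    moreover have "s0 \<le> s0 * (1 + t)" using t c_abs by (simp add: mult_le_cancel_left1)
    ultimately have "p2 t \<ge> s0 - \<bar>c\<bar>" unfolding p2_def by linarith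
    thus ?thesis unfolding pm_def by linarith
  qed
  have p3ge: "p3 t \<ge> pm" if "t \<in> S" for t
  proof -
    have t: "0 < t" "t < 1" using that tS by auto
    have "0 \<le> (s0 + c) * t" using t c_abs by (intro mult_nonneg_nonneg) auto
    hence "p3 t \<ge> alpha^2" unfolding p3_def by linarith
    thus ?thesis unfolding pm_def by linarith
  qed
  define a1 where "a1 = bin (1/2) p1 1"
  define a2 where "a2 = (\<lambda>t. bin (-1/2) (p2 t) (1 + t))"
  define a3 where "a3 = (\<lambda>t. bin (-1/2) (p3 t) t)"
  define cf where "cf = (\<lambda>n t. (1 - t) powr (-1/2) * conv (conv a1 (a2 t)) (a3 t) n)"
  define B where "B = (2 * p1 powr (1/2)) * (2 * pm powr (-1/2)) * (2 * pm powr (-1/2))"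
  have key: "summable (\<lambda>n. \<bar>conv (conv a1 (a2 t)) (a3 t) n\<bar> * \<rho>^n)
        \<and> (\<Sum>n. \<bar>conv (conv a1 (a2 t)) (a3 t) n\<bar> * \<rho>^n) \<le> B
        \<and> (\<forall>\<delta>. \<bar>\<delta>\<bar> \<le> \<rho> \<longrightarrow> (\<lambda>n. conv (conv a1 (a2 t)) (a3 t) n * \<delta>^n) sums
               ((p1 + 1 * \<delta>) powr (1/2) * (p2 t + (1 + t) * \<delta>) powr (-1/2) * (p3 t + t * \<delta>) powr (-1/2)))"
    if tS': "t \<in> S" for t
  proof -
    have t: "0 < t" "t < 1" using tS' tS by auto
    have P1: "0 < p1" using pm0 pmp1 by linarith
    have P2: "0 < p2 t" using pm0 p2ge[OF tS'] by linarith
    have P3: "0 < p3 t" using pm0 p3ge[OF tS'] by linarith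
    have q1: "\<bar>1::real\<bar> * \<rho> \<le> p1 / 2" using pmp1 pm0 by (simp add: \<rho>_def)
    have q2: "\<bar>1 + t\<bar> * \<rho> \<le> p2 t / 2"
    proof -
      have "\<bar>1 + t\<bar> * \<rho> \<le> 2 * \<rho>" using t r0 by (intro mult_right_mono) auto
      thus ?thesis using p2ge[OF tS'] by (simp add: \<rho>_def)
    qed
    have q3: "\<bar>t\<bar> * \<rho> \<le> p3 t / 2"
    proof -
      have "\<bar>t\<bar> * \<rho> \<le> 1 * \<rho>" using t r0 by (intro mult_right_mono) auto
      thus ?thesis using p3ge[OF tS'] pm0 unfolding \<rho>_def by linarith
    qed
    note b1 = bin_abs[OF P1 less_imp_le[OF r0] q1, of "1/2"]
    note b2 = bin_abs[OF P2 less_imp_le[OF r0] q2, of "-1/2"]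
    note b3 = bin_abs[OF P3 less_imp_le[OF r0] q3, of "-1/2"]
    have m2: "2 * p2 t powr (-1/2) \<le> 2 * pm powr (-1/2)"
      using powr_mono2'[of "-1/2" pm "p2 t"] pm0 p2ge[OF tS'] by simp
    have m3: "2 * p3 t powr (-1/2) \<le> 2 * pm powr (-1/2)"
      using powr_mono2'[of "-1/2" pm "p3 t"] pm0 p3ge[OF tS'] by simp
    have s1: "(\<lambda>n. a1 n * \<delta>^n) sums (p1 + 1 * \<delta>) powr (1/2)" if "\<bar>\<delta>\<bar> \<le> \<rho>" for \<delta>
      unfolding a1_def by (rule bin_sums[OF P1]) (use that q1 r0 pm0 pmp1 in \<open>auto simp: \<rho>_def\<close>)
    have s2: "(\<lambda>n. a2 t n * \<delta>^n) sums (p2 t + (1 + t) * \<delta>) powr (-1/2)" if d: "\<bar>\<delta>\<bar> \<le> \<rho>" for \<delta>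
      unfolding a2_def
    proof (rule bin_sums[OF P2])
      have "\<bar>(1 + t) * \<delta>\<bar> \<le> \<bar>1 + t\<bar> * \<rho>" using d by (simp add: abs_mult mult_left_mono)
      thus "\<bar>(1 + t) * \<delta>\<bar> < p2 t" using q2 P2 by linarith
    qed
    have s3: "(\<lambda>n. a3 t n * \<delta>^n) sums (p3 t + t * \<delta>) powr (-1/2)" if d: "\<bar>\<delta>\<bar> \<le> \<rho>" for \<delta>
      unfolding a3_def
    proof (rule bin_sums[OF P3])
      have "\<bar>t * \<delta>\<bar> \<le> \<bar>t\<bar> * \<rho>" using d by (simp add: abs_mult mult_left_mono)
      thus "\<bar>t * \<delta>\<bar> < p3 t" using q3 P3 by linarith
    qed
    have sa1: "summable (\<lambda>n. \<bar>a1 n\<bar> * \<rho>^n)" "(\<Sum>n. \<bar>a1 n\<bar> * \<rho>^n) \<le> 2 * p1 powr (1/2)"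
      using b1 by (auto simp: a1_def)
    have sa2: "summable (\<lambda>n. \<bar>a2 t n\<bar> * \<rho>^n)" "(\<Sum>n. \<bar>a2 t n\<bar> * \<rho>^n) \<le> 2 * pm powr (-1/2)"
      using b2 m2 by (auto simp: a2_def)
    have sa3: "summable (\<lambda>n. \<bar>a3 t n\<bar> * \<rho>^n)" "(\<Sum>n. \<bar>a3 t n\<bar> * \<rho>^n) \<le> 2 * pm powr (-1/2)"
      using b3 m3 by (auto simp: a3_def)
    have d0: "\<bar>0::real\<bar> \<le> \<rho>" using r0 by simp
    note T0 = triple[OF less_imp_le[OF r0] d0 sa1 s1[OF d0] sa2 s2[OF d0] sa3 s3[OF d0]]
    show ?thesis
    proof (intro conjI allI impI)
      show "summable (\<lambda>n. \<bar>conv (conv a1 (a2 t)) (a3 t) n\<bar> * \<rho>^n)" by (rule T0(1))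
      show "(\<Sum>n. \<bar>conv (conv a1 (a2 t)) (a3 t) n\<bar> * \<rho>^n) \<le> B" using T0(2) by (simp add: B_def)
      fix \<delta> :: real assume d: "\<bar>\<delta>\<bar> \<le> \<rho>"
      show "(\<lambda>n. conv (conv a1 (a2 t)) (a3 t) n * \<delta>^n) sums
               ((p1 + 1 * \<delta>) powr (1/2) * (p2 t + (1 + t) * \<delta>) powr (-1/2) * (p3 t + t * \<delta>) powr (-1/2))"
        by (rule triple(3)[OF less_imp_le[OF r0] d sa1 s1[OF d] sa2 s2[OF d] sa3 s3[OF d]])
    qed
  qed
  have B0: "0 \<le> B" unfolding B_def by simp
  have cfabs: "summable (\<lambda>n. \<bar>cf n t\<bar> * \<rho>^n) \<and> (\<Sum>n. \<bar>cf n t\<bar> * \<rho>^n) \<le> (1 - t) powr (-1/2) * B"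
    if tS': "t \<in> S" for t
  proof -
    have e: "\<bar>cf n t\<bar> * \<rho>^n = (1 - t) powr (-1/2) * (\<bar>conv (conv a1 (a2 t)) (a3 t) n\<bar> * \<rho>^n)" for n
      unfolding cf_def by (simp add: abs_mult)
    have sm: "summable (\<lambda>n. \<bar>conv (conv a1 (a2 t)) (a3 t) n\<bar> * \<rho>^n)" using key[OF tS'] by blast
    have le: "(\<Sum>n. \<bar>conv (conv a1 (a2 t)) (a3 t) n\<bar> * \<rho>^n) \<le> B" using key[OF tS'] by blast
    show ?thesis unfolding e
    proof
      show "summable (\<lambda>n. (1 - t) powr (-1/2) * (\<bar>conv (conv a1 (a2 t)) (a3 t) n\<bar> * \<rho>^n))"
        by (rule summable_mult[OF sm])
      show "(\<Sum>n. (1 - t) powr (-1/2) * (\<bar>conv (conv a1 (a2 t)) (a3 t) n\<bar> * \<rho>^n)) \<le> (1 - t) powr (-1/2) * B"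
        using suminf_mult[OF sm, of "(1 - t) powr (-1/2)"] le by (simp add: mult_left_mono)
    qed
  qed
  have main: "(\<lambda>n. (LINT t:S|lborel. cf n t) * \<delta>^n) sums (LINT t:S|lborel. hf lam alpha (s0 + \<delta>) t)"
    if d: "\<bar>\<delta>\<bar> \<le> \<rho>" for \<delta>
  proof (rule ps_integral[where g = "\<lambda>t. (1 - t) powr (-1/2) * B"])
    show "S \<in> sets lborel" unfolding S_def by simp
    show "cf n \<in> borel_measurable lborel" for n
      unfolding cf_def conv_def a1_def a2_def a3_def bin_def p2_def p3_def by measurable
    show "hf lam alpha (s0 + \<delta>) \<in> borel_measurable lborel"
      unfolding hf_def by measurable
    show "set_integrable lborel S (\<lambda>t. (1 - t) powr (-1/2) * B)"
      unfolding S_def using int_rsqrt1(1) by (rule set_integrable_mult_left)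
    show "(\<lambda>n. cf n t * \<delta>^n) sums hf lam alpha (s0 + \<delta>) t" if tS': "t \<in> S" for t
    proof -
      have "(\<lambda>n. (1 - t) powr (-1/2) * (conv (conv a1 (a2 t)) (a3 t) n * \<delta>^n)) sums
          ((1 - t) powr (-1/2) * ((p1 + 1 * \<delta>) powr (1/2) * (p2 t + (1 + t) * \<delta>) powr (-1/2) * (p3 t + t * \<delta>) powr (-1/2)))"
        by (rule sums_mult) (use key[OF tS'] d in blast)
      moreover have "s0 + \<delta> + (lam^2 - alpha^2) = p1 + 1 * \<delta>" unfolding p1_def c_def by simp
      moreover have "(s0 + \<delta>) * (1 + t) - (lam^2 - alpha^2) * (1 - t) = p2 t + (1 + t) * \<delta>"
        unfolding p2_def c_def by (simp add: algebra_simps)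
      moreover have "alpha^2 + (s0 + \<delta> + (lam^2 - alpha^2)) * t = p3 t + t * \<delta>"
        unfolding p3_def c_def by (simp add: algebra_simps)
      ultimately show ?thesis unfolding hf_def cf_def by (simp only: mult_ac)
    qed
    show "\<bar>\<Sum>n<N. cf n t * \<delta>^n\<bar> \<le> (1 - t) powr (-1/2) * B" if tS': "t \<in> S" for t N
    proof -
      have sm: "summable (\<lambda>n. \<bar>cf n t\<bar> * \<rho>^n)" using cfabs[OF tS'] by blast
      have "\<bar>\<Sum>n<N. cf n t * \<delta>^n\<bar> \<le> (\<Sum>n<N. \<bar>cf n t * \<delta>^n\<bar>)" by (rule sum_abs)
      also have "\<dots> \<le> (\<Sum>n<N. \<bar>cf n t\<bar> * \<rho>^n)"
        by (rule sum_mono) (auto simp: abs_mult power_abs intro!: mult_left_mono power_mono d)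
      also have "\<dots> \<le> (\<Sum>n. \<bar>cf n t\<bar> * \<rho>^n)"
        by (rule sum_le_suminf[OF sm]) (use r0 in auto)
      also have "\<dots> \<le> (1 - t) powr (-1/2) * B" using cfabs[OF tS'] by blast
      finally show ?thesis .
    qed
    show "set_integrable lborel S (cf n)" for n
    proof (rule set_integrable_bound[where f = "\<lambda>t. (1 - t) powr (-1/2) * (B / \<rho>^n)"])
      show "set_integrable lborel S (\<lambda>t. (1 - t) powr (-1/2) * (B / \<rho>^n))"
        unfolding S_def using int_rsqrt1(1) by (rule set_integrable_mult_left)
      show "set_borel_measurable lborel S (cf n)"
        unfolding set_borel_measurable_def S_def cf_def conv_def a1_def a2_def a3_def bin_def p2_def p3_def
        by measurable
      show "AE t in lborel. t \<in> S \<longrightarrow> norm (cf n t) \<le> norm ((1 - t) powr (-1/2) * (B / \<rho>^n))"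
      proof (rule AE_I2, rule impI)
        fix t assume tS': "t \<in> S"
        have sm: "summable (\<lambda>n. \<bar>cf n t\<bar> * \<rho>^n)" using cfabs[OF tS'] by blast
        have "\<bar>cf n t\<bar> * \<rho>^n = (\<Sum>m\<in>{n}. \<bar>cf m t\<bar> * \<rho>^m)" by simp
        also have "\<dots> \<le> (\<Sum>m. \<bar>cf m t\<bar> * \<rho>^m)"
          by (rule sum_le_suminf[OF sm]) (use r0 in auto)
        also have "\<dots> \<le> (1 - t) powr (-1/2) * B" using cfabs[OF tS'] by blast
        finally have "\<bar>cf n t\<bar> * \<rho>^n \<le> (1 - t) powr (-1/2) * B" .
        hence "\<bar>cf n t\<bar> \<le> (1 - t) powr (-1/2) * B / \<rho>^n"
          using r0 by (simp add: le_divide_eq)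
        thus "norm (cf n t) \<le> norm ((1 - t) powr (-1/2) * (B / \<rho>^n))"
          using B0 r0 by (simp add: abs_mult)
      qed
    qed
  qed
  show ?thesis
  proof (intro exI conjI allI impI)
    show "\<rho> > 0" by (rule r0)
    fix \<delta> :: real assume "\<bar>\<delta>\<bar> < \<rho>"
    thus "(\<lambda>n. (LINT t:S|lborel. cf n t) * \<delta>^n) sums Jf lam alpha (s0 + \<delta>)"
      using main[of \<delta>] by (simp add: Jf_def2 S_def)
  qed
qed

lemma hf_bound:
  fixes lam alpha s t :: real
  assumes a: "alpha > 0" and s: "s > \<bar>lam^2 - alpha^2\<bar>" and t: "0 < t" "t < 1"
  shows "0 \<le> hf lam alpha s t"
    and "hf lam alpha s t \<le> ((s + (lam^2 - alpha^2)) powr (1/2) * (s - \<bar>lam^2 - alpha^2\<bar>) powr (-1/2) * (alpha^2) powr (-1/2)) * (1 - t) powr (-1/2)"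
proof -
  define c where "c = lam^2 - alpha^2"
  have cs: "\<bar>c\<bar> < s" using s by (simp add: c_def)
  have p2: "s * (1 + t) - c * (1 - t) \<ge> s - \<bar>c\<bar>"
  proof -
    have "c * (1 - t) \<le> \<bar>c\<bar> * (1 - t)" using t by (intro mult_right_mono) auto
    moreover have "\<bar>c\<bar> * (1 - t) \<le> \<bar>c\<bar>" using t by (simp add: mult_left_le)
    moreover have "s \<le> s * (1 + t)" using t cs by (simp add: mult_le_cancel_left1)
    ultimately show ?thesis by linarith
  qed
  have p3: "alpha^2 + (s + c) * t \<ge> alpha^2"
    using t cs by (simp add: mult_nonneg_nonneg)
  have m2: "(s * (1 + t) - c * (1 - t)) powr (-1/2) \<le> (s - \<bar>c\<bar>) powr (-1/2)"
    using powr_mono2'[of "-1/2" "s - \<bar>c\<bar>" "s * (1 + t) - c * (1 - t)"] cs p2 by simp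
  have m3: "(alpha^2 + (s + c) * t) powr (-1/2) \<le> (alpha^2) powr (-1/2)"
    using powr_mono2'[of "-1/2" "alpha^2" "alpha^2 + (s + c) * t"] a p3 by simp
  show "0 \<le> hf lam alpha s t" unfolding hf_def by simp
  have "hf lam alpha s t = (s + c) powr (1/2) * (s * (1 + t) - c * (1 - t)) powr (-1/2)
      * (alpha^2 + (s + c) * t) powr (-1/2) * (1 - t) powr (-1/2)" unfolding hf_def c_def by simp
  also have "\<dots> \<le> (s + c) powr (1/2) * (s - \<bar>c\<bar>) powr (-1/2) * (alpha^2) powr (-1/2) * (1 - t) powr (-1/2)"
    by (intro mult_mono m2 m3 order_refl) auto
  finally show "hf lam alpha s t \<le> ((s + (lam^2 - alpha^2)) powr (1/2) * (s - \<bar>lam^2 - alpha^2\<bar>) powr (-1/2) * (alpha^2) powr (-1/2)) * (1 - t) powr (-1/2)"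
    by (simp add: c_def)
qed

lemma hf_int:
  fixes lam alpha s :: real
  assumes a: "alpha > 0" and s: "s > \<bar>lam^2 - alpha^2\<bar>"
  shows "set_integrable lborel (einterval 0 1) (hf lam alpha s)"
proof (rule set_integrable_bound[where f = "\<lambda>t. (1 - t) powr (-1/2) * ((s + (lam^2 - alpha^2)) powr (1/2) * (s - \<bar>lam^2 - alpha^2\<bar>) powr (-1/2) * (alpha^2) powr (-1/2))"])
  show "set_integrable lborel (einterval 0 1) (\<lambda>t. (1 - t) powr (-1/2) * ((s + (lam^2 - alpha^2)) powr (1/2) * (s - \<bar>lam^2 - alpha^2\<bar>) powr (-1/2) * (alpha^2) powr (-1/2)))"
    using int_rsqrt1(1) by (rule set_integrable_mult_left)
  show "set_borel_measurable lborel (einterval 0 1) (hf lam alpha s)"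
    unfolding set_borel_measurable_def hf_def by measurable
  show "AE t in lborel. t \<in> einterval 0 1 \<longrightarrow> norm (hf lam alpha s t) \<le> norm ((1 - t) powr (-1/2) * ((s + (lam^2 - alpha^2)) powr (1/2) * (s - \<bar>lam^2 - alpha^2\<bar>) powr (-1/2) * (alpha^2) powr (-1/2)))"
  proof (rule AE_I2, rule impI)
    fix t assume "t \<in> einterval 0 1"
    hence t: "0 < t" "t < 1" by (auto simp: einterval_iff)
    note hb = hf_bound[OF a s t]
    thus "norm (hf lam alpha s t) \<le> norm ((1 - t) powr (-1/2) * ((s + (lam^2 - alpha^2)) powr (1/2) * (s - \<bar>lam^2 - alpha^2\<bar>) powr (-1/2) * (alpha^2) powr (-1/2)))"
      by (simp add: mult.commute)
  qed
qed

lemma E_gt_iff: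
  fixes lam alpha E :: real
  assumes E: "E > F lam alpha"
  shows "lam^4 + 4 * E > 0" and "sqrt (lam^4 + 4 * E) > \<bar>lam^2 - alpha^2\<bar>"
proof -
  have "F lam alpha + lam^4/4 = (alpha^2 - lam^2)^2 / 4" unfolding F_def by (simp add: power2_eq_square power4_eq_xxxx algebra_simps)
  hence "F lam alpha + lam^4/4 \<ge> 0" by (metis divide_nonneg_pos zero_le_power2 zero_less_numeral)
  thus K: "lam^4 + 4 * E > 0" using E by linarith
  define s where "s = sqrt (lam^4 + 4 * E)"
  have s0: "s > 0" using K by (simp add: s_def)
  have ss: "s^2 = lam^4 + 4 * E" using K by (simp add: s_def)
  have "(lam^2 + s - alpha^2) * (alpha^2 - (lam^2 - s)) = 4 * (E - F lam alpha)"
    unfolding F_def using ss by (simp add: power2_eq_square power4_eq_xxxx algebra_simps)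
  hence pos: "(lam^2 + s - alpha^2) * (alpha^2 - (lam^2 - s)) > 0" using E by simp
  have "lam^2 + s - alpha^2 > 0 \<and> alpha^2 - (lam^2 - s) > 0"
  proof (rule ccontr)
    assume "\<not> ?thesis"
    hence "lam^2 + s - alpha^2 \<le> 0 \<or> alpha^2 - (lam^2 - s) \<le> 0" by linarith
    thus False
    proof
      assume h: "lam^2 + s - alpha^2 \<le> 0"
      hence "alpha^2 - (lam^2 - s) > 0" using s0 by linarith
      thus False using pos h by (smt (verit) mult_nonpos_nonneg)
    next
      assume h: "alpha^2 - (lam^2 - s) \<le> 0"
      hence "lam^2 + s - alpha^2 > 0" using s0 by linarith
      thus False using pos h by (smt (verit) mult_nonneg_nonpos)
    qed
  qed
  thus "sqrt (lam^4 + 4 * E) > \<bar>lam^2 - alpha^2\<bar>" unfolding s_def[symmetric] by linarith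
qed

lemma L2_rep:
  fixes lam alpha E :: real
  assumes a: "alpha > 0" and E: "E > F lam alpha"
  shows "L2 lam alpha E = 2 * Jf lam alpha (sqrt (lam^4 + 4 * E))"
proof -
  note EG = E_gt_iff[OF E]
  define s where "s = sqrt (lam^4 + 4 * E)"
  define c where "c = lam^2 - alpha^2"
  define m where "m = s + c"
  have s0: "s > 0" using EG by (simp add: s_def)
  have ss: "s^2 = lam^4 + 4 * E" using EG by (simp add: s_def)
  have cs: "\<bar>c\<bar> < s" using EG by (simp add: s_def c_def)
  have m0: "m > 0" using cs by (simp add: m_def)
  define g where "g = (\<lambda>t::real. sqrt (alpha^2 + m * t))"
  define g' where "g' = (\<lambda>t::real. m / (2 * sqrt (alpha^2 + m * t)))"
  define f where "f = (\<lambda>k. 1 / sqrt (E - F lam k))"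
  have X0: "alpha^2 + m * t > 0" if "0 \<le> t" for t using a m0 that by (simp add: add_pos_nonneg)
  have EF: "E - F lam (g t) = m * (1 - t) * (s * (1 + t) - c * (1 - t)) / 4" if "0 \<le> t" for t
  proof -
    have gg: "(g t)^2 = alpha^2 + m * t" using X0[OF that] by (simp add: g_def)
    have g4: "(g t)^4 = (alpha^2 + m * t)^2" using gg by (metis power_mult numeral_Bit0 mult_2_right power2_eq_square numeral_times_numeral)
    have "E - F lam (g t) = E - (alpha^2 + m * t)^2 / 4 + lam^2 / 2 * (alpha^2 + m * t)"
      unfolding F_def g4 gg by simp
    also have "\<dots> = m * (1 - t) * (s * (1 + t) - c * (1 - t)) / 4"
    proof -
      have "4 * E = s^2 - lam^4" using ss by simp
      thus ?thesis unfolding m_def c_def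
        by (simp add: field_simps power2_eq_square power4_eq_xxxx)
    qed
    finally show ?thesis .
  qed
  have p2pos: "s * (1 + t) - c * (1 - t) > 0" if "0 \<le> t" "t < 1" for t
  proof -
    have "c * (1 - t) \<le> \<bar>c\<bar> * (1 - t)" using that by (intro mult_right_mono) auto
    moreover have "\<bar>c\<bar> * (1 - t) \<le> \<bar>c\<bar>" using that by (simp add: mult_left_le)
    moreover have "s \<le> s * (1 + t)" using that s0 by (simp add: mult_le_cancel_left1)
    ultimately show ?thesis using cs by linarith
  qed
  have EFpos: "E - F lam (g t) > 0" if "0 \<le> t" "t < 1" for t
    unfolding EF[OF that(1)] using m0 that p2pos[OF that] by simp
  have ident: "f (g t) * g' t = hf lam alpha s t" if "0 < t" "t < 1" for t
  proof -
    have t0: "0 \<le> t" using that by simp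
    have P2: "s * (1 + t) - c * (1 - t) > 0" using p2pos[OF t0 that(2)] .
    have X: "alpha^2 + m * t > 0" using X0[OF t0] .
    have "hf lam alpha s t = sqrt m * (1 / sqrt (s * (1 + t) - c * (1 - t))) * (1 / sqrt (alpha^2 + m * t)) * (1 / sqrt (1 - t))"
      unfolding hf_def m_def[symmetric] c_def[symmetric] using m0 P2 X that
      by (simp add: powr_half_sqrt rsq[of "s * (1 + t) - c * (1 - t)", simplified] rsq[of "alpha^2 + m * t", simplified] rsq[of "1 - t", simplified])
    also have "\<dots> = f (g t) * g' t"
    proof -
      have e1: "sqrt (E - F lam (g t)) = sqrt m * sqrt (1 - t) * sqrt (s * (1 + t) - c * (1 - t)) / 2"
        unfolding EF[OF t0] by (simp add: real_sqrt_mult real_sqrt_divide)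
      have e2: "m = sqrt m * sqrt m" using m0 by simp
      have alg: "A * (1 / C) * (1 / D) * (1 / B) = 1 / (A * B * C / 2) * (A * A / (2 * D))"
        if "A > 0" "B > 0" "C > 0" "D > 0" for A B C D :: real
        using that by (simp add: field_simps)
      have "sqrt m * (1 / sqrt (s * (1 + t) - c * (1 - t))) * (1 / sqrt (alpha^2 + m * t)) * (1 / sqrt (1 - t))
          = 1 / (sqrt m * sqrt (1 - t) * sqrt (s * (1 + t) - c * (1 - t)) / 2) * (sqrt m * sqrt m / (2 * sqrt (alpha^2 + m * t)))"
        by (rule alg) (use m0 P2 X that in auto)
      also have "\<dots> = f (g t) * g' t" unfolding f_def g'_def e1[symmetric] e2[symmetric] ..
      finally show ?thesis .
    qed
    finally show ?thesis by simp
  qed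
  have g0: "g 0 = alpha" using a by (simp add: g_def)
  have g1: "g 1 = sqrt (lam^2 + s)" unfolding g_def m_def c_def by simp
  have sub: "(LBINT x=ereal (g 0)..ereal (g 1). f x) = (LBINT x=0..1. f (g x) * g' x)"
  proof (rule interval_integral_substitution_nonneg(2)[where g=g and g'=g' and f=f])
    show "(0::ereal) < 1" by simp
    show "DERIV g x :> g' x" if "0 < ereal x" "ereal x < 1" for x
    proof -
      have x: "0 \<le> x" using that by simp
      have p: "alpha^2 + m * x > 0" using X0[OF x] .
      have D: "DERIV g x :> inverse (sqrt (alpha^2 + m * x)) / 2 * (0 + m * 1)"
        unfolding g_def using p by (auto intro!: derivative_eq_intros)
      have "inverse (sqrt (alpha^2 + m * x)) / 2 * (0 + m * 1) = g' x"
        unfolding g'_def using p by (simp add: divide_simps)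
      thus ?thesis using D by simp
    qed
    show "isCont f (g x)" if "0 < ereal x" "ereal x < 1" for x
    proof -
      have x: "0 \<le> x" "x < 1" using that by auto
      have ne: "sqrt (E - F lam (g x)) \<noteq> 0" using EFpos[OF x] by simp
      have c1: "isCont (\<lambda>k. E - F lam k) (g x)" unfolding F_def by (intro continuous_intros) simp_all
      have c2: "isCont (\<lambda>k. sqrt (E - F lam k)) (g x)" by (rule continuous_at_compose[OF c1, unfolded comp_def]) (rule isCont_real_sqrt)
      show ?thesis unfolding f_def by (rule continuous_intros c2 ne)+
    qed
    show "isCont g' x" if "0 < ereal x" "ereal x < 1" for x
    proof -
      have x: "0 \<le> x" using that by simp
      show ?thesis unfolding g'_def using X0[OF x] by (auto intro!: continuous_intros)
    qed
    show "0 \<le> f (g x)" if "0 < ereal x" "ereal x < 1" for x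
    proof -
      have x: "0 \<le> x" "x < 1" using that by auto
      show ?thesis unfolding f_def using EFpos[OF x] by simp
    qed
    show "0 \<le> g' x" if "0 \<le> ereal x" "ereal x \<le> 1" for x
    proof -
      have x: "0 \<le> x" using that by simp
      show ?thesis unfolding g'_def using m0 X0[OF x] by simp
    qed
    show "((ereal \<circ> g \<circ> real_of_ereal) \<longlongrightarrow> ereal (g 0)) (at_right 0)"
      unfolding g_def by (auto simp: zero_ereal_def ereal_tendsto_simps intro!: tendsto_eq_intros)
    show "((ereal \<circ> g \<circ> real_of_ereal) \<longlongrightarrow> ereal (g 1)) (at_left 1)"
      unfolding g_def by (auto simp: one_ereal_def ereal_tendsto_simps intro!: tendsto_eq_intros)
    show "set_integrable lborel (einterval 0 1) (\<lambda>x. f (g x) * g' x)"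
    proof (rule set_integrable_cong[THEN iffD1, OF refl refl _ hf_int[OF a cs[unfolded c_def]]])
      show "\<And>x. x \<in> einterval 0 1 \<Longrightarrow> hf lam alpha s x = f (g x) * g' x"
        using ident by (auto simp: einterval_iff)
    qed
  qed
  have "(LBINT x=0..1. f (g x) * g' x) = (LINT x:einterval 0 1|lborel. hf lam alpha s x)"
    unfolding interval_lebesgue_integral_def
    by (simp, rule set_lebesgue_integral_cong) (auto simp: einterval_iff ident)
  hence "(LBINT x=ereal alpha..ereal (sqrt (lam^2 + s)). f x) = Jf lam alpha s"
    using sub g0 g1 by (simp add: Jf_def2)
  thus ?thesis unfolding L2_def kappaM_def f_def s_def by simp
qed

lemma sqrt_series:
  fixes K R :: real
  assumes K: "K > 0" and R: "R > 0" "R \<le> K / 8"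
  defines "b \<equiv> (\<lambda>k. if k = 0 then 0 else bin (1/2) K 4 k)"
  shows "summable (\<lambda>k. \<bar>b k\<bar> * R^k)" and "(\<Sum>k. \<bar>b k\<bar> * R^k) \<le> 4 * sqrt K * (4 * R / K)"
    and "\<And>e. \<bar>e\<bar> < R \<Longrightarrow> (\<lambda>k. b k * e^k) sums (sqrt (K + 4 * e) - sqrt K)"
proof -
  define q where "q = 4 * R / K"
  have q0: "0 < q" using K R by (simp add: q_def)
  have q2: "q \<le> 1/2" using K R by (simp add: q_def field_simps)
  have le: "\<bar>b k\<bar> * R^k \<le> 2 * sqrt K * q * (1/2)^k" for k
  proof (cases k)
    case 0 thus ?thesis using q0 K by (simp add: b_def)
  next
    case (Suc j)
    have "\<bar>b k\<bar> * R^k = K powr (1/2) * \<bar>(1/2) gchoose k\<bar> * q^k"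
      using Suc K R by (simp add: b_def bin_def q_def abs_mult power_abs power_divide power_mult_distrib)
    also have "\<dots> \<le> K powr (1/2) * 1 * q^k"
      by (intro mult_mono gchoose_abs_le1 order_refl) (use q0 in auto)
    also have "q^k = q * q^j" using Suc by simp
    also have "q^j \<le> (1/2)^j" by (rule power_mono[OF q2]) (use q0 in simp)
    hence "K powr (1/2) * 1 * (q * q^j) \<le> K powr (1/2) * 1 * (q * (1/2)^j)"
      using q0 by (intro mult_left_mono) auto
    also have "K powr (1/2) * 1 * (q * (1/2)^j) = 2 * sqrt K * q * (1/2)^k"
      using Suc K by (simp add: powr_half_sqrt)
    finally show ?thesis .
  qed
  have gs: "(\<lambda>k. 2 * sqrt K * q * (1/2::real)^k) sums (2 * sqrt K * q * 2)"
    using sums_mult[OF geometric_sums[of "1/2::real"], of "2 * sqrt K * q"] by simp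
  show sb: "summable (\<lambda>k. \<bar>b k\<bar> * R^k)"
    by (rule summable_comparison_test[OF _ sums_summable[OF gs]]) (use le R in auto)
  have "(\<Sum>k. \<bar>b k\<bar> * R^k) \<le> (\<Sum>k. 2 * sqrt K * q * (1/2::real)^k)"
    by (rule suminf_le[OF le sb sums_summable[OF gs]])
  thus "(\<Sum>k. \<bar>b k\<bar> * R^k) \<le> 4 * sqrt K * (4 * R / K)" using gs by (simp add: sums_iff q_def)
  fix e :: real assume e: "\<bar>e\<bar> < R"
  have e4: "\<bar>4 * e\<bar> < K" using e R by simp
  have S1: "(\<lambda>k. bin (1/2) K 4 k * e^k) sums (K + 4 * e) powr (1/2)" by (rule bin_sums[OF K e4])
  have S2: "(\<lambda>k. if k = 0 then K powr (1/2) else 0) sums K powr (1/2)"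
    using sums_single[of 0 "\<lambda>_. K powr (1/2)"] by simp
  have "(\<lambda>k. bin (1/2) K 4 k * e^k - (if k = 0 then K powr (1/2) else 0)) sums ((K + 4 * e) powr (1/2) - K powr (1/2))"
    by (rule sums_diff[OF S1 S2])
  moreover have "(\<lambda>k. bin (1/2) K 4 k * e^k - (if k = 0 then K powr (1/2) else 0)) = (\<lambda>k. b k * e^k)"
    by (rule ext) (simp add: b_def bin_def)
  moreover have "(K + 4 * e) powr (1/2) - K powr (1/2) = sqrt (K + 4 * e) - sqrt K"
    using e4 K by (simp add: powr_half_sqrt)
  ultimately show "(\<lambda>k. b k * e^k) sums (sqrt (K + 4 * e) - sqrt K)" by simp
qed

lemma L2_analytic:
  fixes lam alpha :: real
  assumes a: "alpha > 0"
  shows "real_analytic_on (L2 lam alpha) {F lam alpha<..}"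
  unfolding real_analytic_on_def
proof
  fix E0 assume "E0 \<in> {F lam alpha<..}"
  hence E0: "E0 > F lam alpha" by simp
  note EG = E_gt_iff[OF E0]
  define K where "K = lam^4 + 4 * E0"
  define s0 where "s0 = sqrt K"
  have K0: "K > 0" using EG by (simp add: K_def)
  have s0c: "s0 > \<bar>lam^2 - alpha^2\<bar>" using EG by (simp add: s0_def K_def)
  obtain \<rho> A where r: "\<rho> > 0" and AS: "\<And>\<delta>. \<bar>\<delta>\<bar> < \<rho> \<Longrightarrow> (\<lambda>n. A n * \<delta>^n) sums Jf lam alpha (s0 + \<delta>)"
    using J_analytic[OF a s0c] by blast
  have sK: "sqrt K > 0" using K0 by simp
  define R where "R = min ((E0 - F lam alpha) / 2) (min (K / 8) (\<rho> * K / (32 * sqrt K)))"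
  have R0: "R > 0" using E0 K0 r sK by (simp add: R_def)
  have RK: "R \<le> K / 8" unfolding R_def by (meson min.cobounded1 min.cobounded2 order_trans)
  have RE: "R \<le> (E0 - F lam alpha) / 2" unfolding R_def by (rule min.cobounded1)
  have Rr: "R \<le> \<rho> * K / (32 * sqrt K)" unfolding R_def by (meson min.cobounded2 order_trans)
  define b where "b k = (if k = 0 then 0 else bin (1/2) K 4 k)" for k
  note SS = sqrt_series[OF K0 R0 RK, folded b_def]
  have bX: "(\<Sum>k. \<bar>b k\<bar> * R^k) < \<rho>"
  proof -
    have "4 * sqrt K * (4 * R / K) \<le> 4 * sqrt K * (4 * (\<rho> * K / (32 * sqrt K)) / K)"
      using Rr K0 sK by (intro mult_left_mono divide_right_mono mult_left_mono) auto
    also have "\<dots> = \<rho> / 2" using K0 sK by (simp add: field_simps)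
    finally show ?thesis using SS(2) r by linarith
  qed
  define C where "C = (\<lambda>j. 2 * (\<Sum>n. A n * pw b n j))"
  show "\<exists>r>0. \<exists>a. \<forall>y. \<bar>y - E0\<bar> < r \<longrightarrow> (\<lambda>n. a n * (y - E0)^n) sums L2 lam alpha y"
  proof (intro exI conjI allI impI)
    show "R > 0" by (rule R0)
    fix y assume y: "\<bar>y - E0\<bar> < R"
    define e where "e = y - E0"
    have e: "\<bar>e\<bar> < R" using y by (simp add: e_def)
    have inner: "(\<lambda>k. b k * e^k) sums (sqrt (K + 4 * e) - sqrt K)" by (rule SS(3)[OF e])
    have "(\<lambda>j. (\<Sum>n. A n * pw b n j) * e^j) sums Jf lam alpha (s0 + (sqrt (K + 4 * e) - sqrt K))"
      by (rule ps_compose[where G = "\<lambda>d. Jf lam alpha (s0 + d)", OF AS R0 less_imp_le[OF e] SS(1) bX inner])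
    moreover have "s0 + (sqrt (K + 4 * e) - sqrt K) = sqrt (lam^4 + 4 * y)"
      by (simp add: s0_def K_def e_def algebra_simps)
    moreover have "y > F lam alpha" using y RE by (simp add: abs_less_iff)
    ultimately have "(\<lambda>j. (\<Sum>n. A n * pw b n j) * e^j) sums (L2 lam alpha y / 2)"
      using L2_rep[OF a] by simp
    from sums_mult[OF this, of 2]
    show "(\<lambda>n. C n * (y - E0)^n) sums L2 lam alpha y"
      by (simp add: C_def e_def mult.assoc)
  qed
qed

lemma aux_uv:
  fixes u v :: real
  assumes u: "u > 0" and v: "v > 0" and uv: "u^2 + v^2 = 1"
  shows "1 / (u * v) \<le> 1 / u + 1 / v"
proof -
  have "(u + v)^2 \<ge> 1" using uv u v by (simp add: power2_sum)
  hence "u + v \<ge> 1"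
    by (metis abs_of_pos add_pos_pos one_le_power power2_le_imp_le u v zero_le_one le_less_linear not_le
              one_power2 power2_eq_1_iff abs_le_square_iff abs_one)
  hence "1 / (u * v) \<le> (u + v) / (u * v)" using u v by (simp add: divide_right_mono)
  also have "\<dots> = 1 / u + 1 / v" using u v by (simp add: field_simps)
  finally show ?thesis .
qed

lemma hf_bound2:
  fixes lam alpha s t :: real
  assumes a: "alpha > 0" and s: "s > 0" "s > 2 * \<bar>lam^2 - alpha^2\<bar>" and t: "0 < t" "t < 1"
  shows "hf lam alpha s t \<le> sqrt 2 / sqrt s * (t powr (-1/2) + (1 - t) powr (-1/2))"
proof -
  define c where "c = lam^2 - alpha^2"
  define m where "m = s + c"
  define P2 where "P2 = s * (1 + t) - c * (1 - t)"
  define P3 where "P3 = alpha^2 + m * t"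
  have cs: "2 * \<bar>c\<bar> < s" using s by (simp add: c_def)
  have m0: "m > 0" using cs s unfolding m_def by linarith
  have P2ge: "P2 \<ge> s / 2"
  proof -
    have "c * (1 - t) \<le> \<bar>c\<bar> * (1 - t)" using t by (intro mult_right_mono) auto
    moreover have "\<bar>c\<bar> * (1 - t) \<le> \<bar>c\<bar>" using t by (simp add: mult_left_le)
    moreover have "s \<le> s * (1 + t)" using t s by (simp add: mult_le_cancel_left1)
    ultimately show ?thesis using cs unfolding P2_def by linarith
  qed
  have P2: "P2 > 0" using P2ge s by linarith
  have mt: "m * t > 0" using m0 t by simp
  have P3ge: "P3 \<ge> m * t" unfolding P3_def by simp
  have P3: "P3 > 0" using P3ge mt by linarith
  have "hf lam alpha s t = sqrt m * (1 / sqrt P2) * (1 / sqrt P3) * (1 / sqrt (1 - t))"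
    unfolding hf_def m_def[symmetric] c_def[symmetric] P2_def[symmetric] P3_def[symmetric] using m0 P2 P3 t
    by (simp add: powr_half_sqrt rsq[of P2, simplified] rsq[of P3, simplified] rsq[of "1 - t", simplified])
  also have "\<dots> \<le> sqrt m * (1 / sqrt (s / 2)) * (1 / sqrt (m * t)) * (1 / sqrt (1 - t))"
  proof -
    have A: "1 / sqrt P2 \<le> 1 / sqrt (s / 2)"
      using P2ge s by (intro divide_left_mono real_sqrt_le_mono mult_pos_pos) auto
    have B: "1 / sqrt P3 \<le> 1 / sqrt (m * t)"
      using P3ge mt by (intro divide_left_mono real_sqrt_le_mono mult_pos_pos) auto
    show ?thesis using A B t m0 P2 P3 s
      by (intro mult_mono mult_right_mono mult_left_mono) auto
  qed
  also have "\<dots> = sqrt 2 / sqrt s * (1 / (sqrt t * sqrt (1 - t)))"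
  proof -
    have "sqrt (m * t) = sqrt m * sqrt t" by (simp add: real_sqrt_mult)
    moreover have "sqrt (s / 2) = sqrt s / sqrt 2" by (simp add: real_sqrt_divide)
    moreover have "sqrt m > 0" "sqrt s > 0" "sqrt t > 0" "sqrt (1 - t) > 0" using m0 s t by auto
    ultimately show ?thesis by (simp add: field_simps)
  qed
  also have "\<dots> \<le> sqrt 2 / sqrt s * (1 / sqrt t + 1 / sqrt (1 - t))"
    by (rule mult_left_mono[OF aux_uv]) (use t s in auto)
  also have "\<dots> = sqrt 2 / sqrt s * (t powr (-1/2) + (1 - t) powr (-1/2))"
    using t rsq[of t] rsq[of "1 - t"] by simp
  finally show ?thesis .
qed

lemma Jf_bound:
  fixes lam alpha s :: real
  assumes a: "alpha > 0" and s: "s > 0" "s > 2 * \<bar>lam^2 - alpha^2\<bar>"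
  shows "0 \<le> Jf lam alpha s" and "Jf lam alpha s \<le> 4 * sqrt 2 / sqrt s"
proof -
  have s1: "s > \<bar>lam^2 - alpha^2\<bar>" using s abs_ge_zero[of "lam^2 - alpha^2"] by (smt (verit))
  have I1: "set_integrable lborel (einterval 0 1) (hf lam alpha s)" by (rule hf_int[OF a s1])
  have Ia: "set_integrable lborel (einterval 0 1) (\<lambda>t::real. t powr (-1/2))" by (rule int_rsqrt(1))
  have Ib: "set_integrable lborel (einterval 0 1) (\<lambda>t::real. (1 - t) powr (-1/2))" by (rule int_rsqrt1(1))
  have Va: "(LINT t:einterval 0 1|lborel. t powr (-1/2)) = 2"
    using int_rsqrt(2) by (simp add: interval_lebesgue_integral_def)
  have Vb: "(LINT t:einterval 0 1|lborel. (1 - t) powr (-1/2)) = 2"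
    using int_rsqrt1(2) by (simp add: interval_lebesgue_integral_def)
  have Iab: "set_integrable lborel (einterval 0 1) (\<lambda>t::real. t powr (-1/2) + (1 - t) powr (-1/2))"
    by (rule set_integral_add(1)[OF Ia Ib])
  have Vab: "(LINT t:einterval 0 1|lborel. t powr (-1/2) + (1 - t) powr (-1/2)) = 4"
    using set_integral_add(2)[OF Ia Ib] Va Vb by simp
  have Ic: "set_integrable lborel (einterval 0 1) (\<lambda>t::real. sqrt 2 / sqrt s * (t powr (-1/2) + (1 - t) powr (-1/2)))"
    by (rule set_integrable_mult_right) (use Iab in auto)
  have Vc: "(LINT t:einterval 0 1|lborel. sqrt 2 / sqrt s * (t powr (-1/2) + (1 - t) powr (-1/2))) = sqrt 2 / sqrt s * 4"
    using set_integral_mult_right[where a="sqrt 2 / sqrt s" and M=lborel and A="einterval 0 1" and f="\<lambda>t::real. t powr (-1/2) + (1 - t) powr (-1/2)"] Vab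
    by simp
  show "0 \<le> Jf lam alpha s" unfolding Jf_def2 set_lebesgue_integral_def
    by (rule Bochner_Integration.integral_nonneg) (auto simp: einterval_iff indicator_def intro: hf_bound(1)[OF a s1])
  have "Jf lam alpha s \<le> (LINT t:einterval 0 1|lborel. sqrt 2 / sqrt s * (t powr (-1/2) + (1 - t) powr (-1/2)))"
    unfolding Jf_def2
    by (rule set_integral_mono[OF I1 Ic]) (use hf_bound2[OF a s] in \<open>simp add: einterval_iff\<close>)
  also have "\<dots> = sqrt 2 / sqrt s * 4" by (rule Vc)
  also have "\<dots> = 4 * sqrt 2 / sqrt s" by simp
  finally show "Jf lam alpha s \<le> 4 * sqrt 2 / sqrt s" .
qed

lemma L2_lim:
  fixes lam alpha :: real
  assumes a: "alpha > 0"
  shows "(L2 lam alpha \<longlongrightarrow> 0) at_top"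
proof -
  define c where "c = \<bar>lam^2 - alpha^2\<bar>"
  have lim0: "((\<lambda>E::real. 2 * (4 * sqrt 2 / sqrt (sqrt (lam^4 + 4 * E)))) \<longlongrightarrow> 0) at_top"
    by real_asymp
  have fl: "filterlim (\<lambda>E::real. sqrt (lam^4 + 4 * E)) at_top at_top"
    by real_asymp
  have ev1: "eventually (\<lambda>E. 2 * c + 1 \<le> sqrt (lam^4 + 4 * E)) at_top"
    using fl unfolding filterlim_at_top by blast
  have ev2: "eventually (\<lambda>E. E > F lam alpha) at_top" by (rule eventually_gt_at_top)
  have ev: "eventually (\<lambda>E. 0 \<le> L2 lam alpha E \<and> L2 lam alpha E \<le> 2 * (4 * sqrt 2 / sqrt (sqrt (lam^4 + 4 * E)))) at_top"
    using ev1 ev2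
  proof eventually_elim
    case (elim E)
    have c0: "0 \<le> c" by (simp add: c_def)
    have s0: "sqrt (lam^4 + 4 * E) > 0" using elim c0 by linarith
    have s2: "sqrt (lam^4 + 4 * E) > 2 * \<bar>lam^2 - alpha^2\<bar>" using elim by (simp add: c_def)
    note JB = Jf_bound[OF a s0 s2]
    have "L2 lam alpha E = 2 * Jf lam alpha (sqrt (lam^4 + 4 * E))" by (rule L2_rep[OF a elim(2)])
    thus ?case using JB by simp
  qed
  show ?thesis
  proof (rule tendsto_sandwich[where f = "\<lambda>_. 0" and h = "\<lambda>E. 2 * (4 * sqrt 2 / sqrt (sqrt (lam^4 + 4 * E)))"])
    show "eventually (\<lambda>E. 0 \<le> L2 lam alpha E) at_top" using ev by (rule eventually_mono) simp
    show "eventually (\<lambda>E. L2 lam alpha E \<le> 2 * (4 * sqrt 2 / sqrt (sqrt (lam^4 + 4 * E)))) at_top"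
      using ev by (rule eventually_mono) simp
    show "((\<lambda>_. 0::real) \<longlongrightarrow> 0) at_top" by simp
    show "((\<lambda>E. 2 * (4 * sqrt 2 / sqrt (sqrt (lam^4 + 4 * E)))) \<longlongrightarrow> 0) at_top" by (rule lim0)
  qed
qed

theorem mainTheorem15:
  fixes lam :: real
  assumes "lam \<noteq> 0"
  shows "(\<forall>alpha>0. real_analytic_on (L2 lam alpha) {F lam alpha<..})
       \<and> (\<forall>alpha. 0 < alpha \<and> alpha < 2 * sqrt \<bar>lam\<bar> \<longrightarrow>
            (L2 lam alpha \<longlongrightarrow> 0) at_top)"
  using L2_analytic L2_lim by blast

end
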